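(* Let $\mathbb{F}$ be a field and let $\mathcal{C}_2 \subsetneqq \mathcal{C}_1 \subseteq \mathbb{F}^{m \times n}$ be linear codes with $\ell = \dim(\mathcal{C}_1) - \dim(\mathcal{C}_2)$. Then for every $1 \leq r \leq \ell$, $$d_{M,r}(\mathcal{C}_1,\mathcal{C}_2) \leq n - \left\lceil \frac{\ell - r + 1}{m} \right\rceil + 1.$$ In particular, $\dim(\mathcal{C}_1) - \dim(\mathcal{C}_2) \leq \max\{m,n\}(\min\{m,n\} - d_R(\mathcal{C}_1,\mathcal{C}_2) + 1)$.
   Context: ${\rm Row}(C)$ is the row space of a matrix $C$ and ${\rm Rk}(C) = \dim {\rm Row}(C)$. For a subspace $\mathcal{L} \subseteq \mathbb{F}^n$, $\mathcal{V}_\mathcal{L} = \{V \in \mathbb{F}^{m\times n} \mid {\rm Row}(V) \subseteq \mathcal{L}\}$. For nested linear codes and $1 \le r \le \ell$, $d_{M,r}(\mathcal{C}_1,\mathcal{C}_2) = \min\{\dim \mathcal{L} \mid \mathcal{L} \subseteq \mathbb{F}^n \text{ subspace}, \dim(\mathcal{C}_1 \cap \mathcal{V}_\mathcal{L}) - \dim(\mathcal{C}_2 \cap \mathcal{V}_\mathcal{L}) \geq r\}$, and $d_R(\mathcal{C}_1,\mathcal{C}_2) = \min\{{\rm Rk}(C) \mid C \in \mathcal{C}_1 \setminus \mathcal{C}_2\}$. *)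

theory Defs
  imports "HOL-Analysis.Analysis"
begin

text \<open>Matrices in F^(m x n) are modelled as 'a^'n^'m (m = CARD('m) rows, n = CARD('n)
columns) over an arbitrary field 'a. The F-vector space structure on matrices is
entrywise scaling.\<close>

definition mscale :: "'a::field \<Rightarrow> 'a^'n^'m \<Rightarrow> 'a^'n^'m" where
  "mscale c A = (\<chi> i. c *s (A $ i))"

interpretation mat: vector_space "mscale :: 'a::field \<Rightarrow> 'a^'n^'m \<Rightarrow> 'a^'n^'m"
  by unfold_locales (auto simp: mscale_def vec_eq_iff algebra_simps)

definition Row :: "'a::field^'n^'m \<Rightarrow> ('a^'n) set" where
  "Row C = vec.span (range (\<lambda>i. C $ i))"

definition Rk :: "'a::field^'n^'m \<Rightarrow> nat" where
  "Rk C = vec.dim (Row C)"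

definition VL :: "('a::field^'n) set \<Rightarrow> ('a^'n^'m) set" where
  "VL L = {V. Row V \<subseteq> L}"

definition dMr :: "nat \<Rightarrow> ('a::field^'n^'m) set \<Rightarrow> ('a^'n^'m) set \<Rightarrow> nat" where
  "dMr r C1 C2 = (LEAST d. \<exists>L :: ('a^'n) set. vec.subspace L \<and> vec.dim L = d \<and>
      int (mat.dim (C1 \<inter> VL L)) - int (mat.dim (C2 \<inter> VL L)) \<ge> int r)"

definition dR :: "('a::field^'n^'m) set \<Rightarrow> ('a^'n^'m) set \<Rightarrow> nat" where
  "dR C1 C2 = (LEAST d. \<exists>C \<in> C1 - C2. Rk C = d)"

end

theory Submission
  imports Defs
begin

definition psi :: "'a::field^('m\<times>'n) \<Rightarrow> 'a^'n^'m" where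
  "psi v = (\<chi> i j. v $ (i,j))"

lemma psi_linear: "Vector_Spaces.linear (*s) (mscale :: 'a::field \<Rightarrow> 'a^'n^'m \<Rightarrow> _) psi"
  by unfold_locales (auto simp: psi_def mscale_def vec_eq_iff algebra_simps)

lemma psi_inj: "inj psi"
  by (auto simp: inj_on_def psi_def vec_eq_iff)

lemma psi_surj: "surj psi"
proof (rule surjI)
  fix A :: "'a::field^'b^'c"
  show "psi (\<chi> p. A $ fst p $ snd p) = A"
    unfolding psi_def vec_eq_iff by simp
qed

interpretation psil: Vector_Spaces.linear "(*s)" "mscale :: 'a::field \<Rightarrow> 'a^'n^'m \<Rightarrow> _" psi
  by (rule psi_linear)

interpretation matf: finite_dimensional_vector_space "mscale :: 'a::field \<Rightarrow> 'a^'n^'m \<Rightarrow> _" "psi ` cart_basis"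
proof
  show "finite (psi ` cart_basis)" by (simp add: finite_cart_basis)
  show "mat.independent (psi ` cart_basis)"
    by (rule psil.independent_injective_image[OF vec.independent_Basis]) (use psi_inj inj_on_subset in blast)
  show "mat.span (psi ` cart_basis) = UNIV"
    using psil.span_image[of cart_basis] vec.span_Basis psi_surj by metis
qed

lemma mat_dim_UNIV: "mat.dim (UNIV :: ('a::field^'n^'m) set) = CARD('m) * CARD('n)"
proof -
  have "mat.dim (UNIV :: ('a::field^'n^'m) set) = card (psi ` (cart_basis :: ('a^('m\<times>'n)) set))"
    by (rule matf.dim_UNIV)
  also have "\<dots> = card (cart_basis :: ('a^('m\<times>'n)) set)"
    by (rule card_image) (use psi_inj inj_on_subset in blast)
  also have "\<dots> = CARD('m) * CARD('n)" by (simp add: card_cart_basis)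
  finally show ?thesis .
qed

lemma dim_le_N: "mat.dim (X :: ('a::field^'n^'m) set) \<le> CARD('m) * CARD('n)"
proof -
  have "mat.dim X \<le> mat.dim (UNIV :: ('a::field^'n^'m) set)" by (rule matf.dim_subset) simp
  then show ?thesis by (simp only: mat_dim_UNIV)
qed

lemma key:
  fixes C1 C2 K :: "('a::field^'n^'m) set"
  assumes "mat.subspace C1" "mat.subspace C2" "mat.subspace K" "C2 \<subseteq> C1"
  shows "int (mat.dim (C1 \<inter> K)) - int (mat.dim (C2 \<inter> K)) \<ge>
     int (mat.dim C1) - int (mat.dim C2) - int (CARD('m) * CARD('n)) + int (mat.dim K)"
proof -
  have e1: "mat.dim {x + y |x y. x \<in> C1 \<and> y \<in> K} + mat.dim (C1 \<inter> K) = mat.dim C1 + mat.dim K"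
    by (rule matf.dim_sums_Int) (use assms in auto)
  have e2: "mat.dim {x + y |x y. x \<in> C2 \<and> y \<in> K} + mat.dim (C2 \<inter> K) = mat.dim C2 + mat.dim K"
    by (rule matf.dim_sums_Int) (use assms in auto)
  have b1: "mat.dim {x + y |x y. x \<in> C1 \<and> y \<in> K} \<le> CARD('m) * CARD('n)"
    by (rule dim_le_N)
  have "K \<subseteq> {x + y |x y. x \<in> C2 \<and> y \<in> K}"
  proof
    fix y assume "y \<in> K"
    moreover have "0 \<in> C2" using assms(2) mat.subspace_0 by blast
    ultimately show "y \<in> {x + y |x y. x \<in> C2 \<and> y \<in> K}" by (metis (mono_tags, lifting) add_0 mem_Collect_eq)
  qed
  then have b2: "mat.dim K \<le> mat.dim {x + y |x y. x \<in> C2 \<and> y \<in> K}"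
    by (rule matf.dim_subset)
  show ?thesis using e1 e2 b1 b2 by linarith
qed

definition LS :: "'n set \<Rightarrow> ('a::field^'n) set" where
  "LS S = {x. \<forall>j. j \<notin> S \<longrightarrow> x $ j = 0}"

lemma LS_subspace: "vec.subspace (LS S)"
  by (auto simp: vec.subspace_def LS_def)

lemma LS_dim: "vec.dim (LS S :: ('a::field^'n) set) \<le> card S"
proof -
  have sp: "(LS S :: ('a^'n) set) \<subseteq> vec.span ((\<lambda>j. axis j (1::'a)) ` S)"
  proof
    fix x :: "'a^'n" assume x: "x \<in> LS S"
    have "x = (\<Sum>j\<in>S. x $ j *s axis j 1)"
    proof (subst vec_eq_iff, intro allI)
      fix k
      have "(\<Sum>j\<in>S. x $ j *s axis j (1::'a)) $ k = (\<Sum>j\<in>S. x $ j * (axis j (1::'a)) $ k)"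
        by (simp add: sum_component)
      also have "\<dots> = (\<Sum>j\<in>S. if j = k then x $ k else 0)"
        by (rule sum.cong) (auto simp: axis_def)
      also have "\<dots> = x $ k" using x by (auto simp: LS_def)
      finally show "x $ k = (\<Sum>j\<in>S. x $ j *s axis j 1) $ k" by simp
    qed
    also have "\<dots> \<in> vec.span ((\<lambda>j. axis j (1::'a)) ` S)"
      by (intro vec.span_sum vec.span_scale vec.span_base) auto
    finally show "x \<in> vec.span ((\<lambda>j. axis j (1::'a)) ` S)" .
  qed
  have "vec.dim (LS S :: ('a^'n) set) \<le> card ((\<lambda>j. axis j (1::'a)) ` S)"
    using vec.dim_le_card[OF sp] by simp
  also have "\<dots> \<le> card S" by (rule card_image_le) simp
  finally show ?thesis .
qed

lemma VL_LS: "VL (LS S) = {V :: 'a::field^'n^'m. \<forall>i j. j \<notin> S \<longrightarrow> V $ i $ j = 0}"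
proof -
  have "Row V \<subseteq> LS S \<longleftrightarrow> range (\<lambda>i. V $ i) \<subseteq> LS S" for V :: "'a^'n^'m"
    unfolding Row_def
  proof
    assume a: "vec.span (range (\<lambda>i. V $ i)) \<subseteq> LS S"
    show "range (\<lambda>i. V $ i) \<subseteq> LS S" using subset_trans[OF vec.span_superset a] .
  next
    assume b: "range (\<lambda>i. V $ i) \<subseteq> LS S"
    show "vec.span (range (\<lambda>i. V $ i)) \<subseteq> LS S" by (rule vec.span_minimal[OF b LS_subspace])
  qed
  then show ?thesis by (auto simp: VL_def LS_def image_subset_iff)
qed

lemma VL_LS_subspace: "mat.subspace (VL (LS S) :: ('a::field^'n^'m) set)"
  unfolding VL_LS by (auto simp: mat.subspace_def mscale_def)

lemma psi_axis: "psi (axis (i,j) (1::'a::field)) $ a $ b = (if a = i \<and> b = j then 1 else 0)"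
  by (auto simp: psi_def axis_def)

lemma E_card_indep:
  fixes A :: "'m::finite set" and B :: "'n::finite set"
  defines "E \<equiv> (\<lambda>p. psi (axis p (1::'a::field))) ` (A \<times> B)"
  shows "mat.independent E" "card E = card A * card B"
proof -
  have "E \<subseteq> psi ` cart_basis" by (auto simp: E_def cart_basis_def)
  then show "mat.independent E" using matf.independent_Basis mat.independent_mono by blast
  have "inj_on (\<lambda>p. psi (axis p (1::'a))) (A \<times> B)"
    by (auto simp: inj_on_def inj_eq[OF psi_inj] axis_eq_axis)
  then show "card E = card A * card B" unfolding E_def by (simp add: card_image card_cartesian_product)
qed

lemma VL_LS_dim: "mat.dim (VL (LS S) :: ('a::field^'n^'m) set) \<ge> CARD('m) * card S"
proof -
  let ?E = "(\<lambda>p. psi (axis p (1::'a))) ` ((UNIV::'m set) \<times> S)"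
  have "?E \<subseteq> VL (LS S)" unfolding VL_LS by (auto simp: psi_axis)
  then have "card ?E \<le> mat.dim (VL (LS S) :: ('a::field^'n^'m) set)"
    using matf.independent_card_le_dim E_card_indep(1) by blast
  then show ?thesis using E_card_indep(2)[of "UNIV::'m set" S, where 'a='a] by simp
qed

definition RS :: "'m set \<Rightarrow> ('a::field^'n^'m) set" where
  "RS T = {V. \<forall>i. i \<notin> T \<longrightarrow> V $ i = 0}"

lemma RS_subspace: "mat.subspace (RS T)"
  by (auto simp: mat.subspace_def mscale_def RS_def)

lemma RS_dim: "mat.dim (RS T :: ('a::field^'n^'m) set) \<ge> CARD('n) * card T"
proof -
  let ?E = "(\<lambda>p. psi (axis p (1::'a))) ` (T \<times> (UNIV::'n set))"
  have "?E \<subseteq> RS T" by (auto simp: RS_def vec_eq_iff psi_axis)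
  then have "card ?E \<le> mat.dim (RS T :: ('a::field^'n^'m) set)"
    using matf.independent_card_le_dim E_card_indep(1) by blast
  then show ?thesis using E_card_indep(2)[of T "UNIV::'n set", where 'a='a] by (simp add: mult.commute)
qed

lemma Rk_RS: "V \<in> RS T \<Longrightarrow> Rk V \<le> card T"
proof -
  assume V: "V \<in> RS T"
  have sp: "range (\<lambda>i. V $ i) \<subseteq> vec.span ((\<lambda>i. V $ i) ` T)"
  proof
    fix x assume "x \<in> range (\<lambda>i. V $ i)"
    then obtain i where i: "x = V $ i" by auto
    show "x \<in> vec.span ((\<lambda>i. V $ i) ` T)"
    proof (cases "i \<in> T")
      case True then show ?thesis using i vec.span_base by blast
    next
      case False then show ?thesis using i V vec.span_zero by (auto simp: RS_def)
    qed
  qed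
  have "vec.dim (range (\<lambda>i. V $ i)) \<le> card ((\<lambda>i. V $ i) ` T)"
    using vec.dim_le_card[OF sp] by simp
  also have "\<dots> \<le> card T" by (rule card_image_le) simp
  finally show ?thesis by (simp add: Rk_def Row_def)
qed

lemma Rk_le_m: "Rk (V :: 'a::field^'n^'m) \<le> CARD('m)"
  using Rk_RS[of V UNIV] by (simp add: RS_def)

lemma Rk_le_n: "Rk (V :: 'a::field^'n^'m) \<le> CARD('n)"
  by (simp add: Rk_def dim_subset_UNIV_cart_gen)

lemma Rk_VL: "V \<in> VL L \<Longrightarrow> Rk V \<le> vec.dim L"
  by (simp add: Rk_def VL_def vec.dim_subset)

lemma ceil_lem:
  fixes a m :: nat assumes "m > 0"
  shows "\<lceil>real (a + 1) / real m\<rceil> = int (a div m) + 1"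
proof -
  let ?q = "a div m"
  have h1: "?q * m \<le> a" by (simp add: div_times_less_eq_dividend)
  have h2': "a < ?q * m + m"
    using assms mod_less_divisor[of m a] div_mult_mod_eq[of a m] by linarith
  then have h2: "a < (?q + 1) * m" by (simp add: add.commute)
  have r1: "real ?q * real m \<le> real a" using of_nat_mono[OF h1, where 'a=real] by simp
  have r2: "real a + 1 \<le> (real ?q + 1) * real m"
  proof -
    have "a + 1 \<le> (?q + 1) * m" using h2 by simp
    then have "real (a + 1) \<le> real ((?q + 1) * m)" by (rule of_nat_mono)
    then show ?thesis by (simp add: algebra_simps)
  qed
  have mpos: "real m > 0" using assms by simp
  show ?thesis
  proof (subst ceiling_eq_iff, intro conjI)
    show "real_of_int (int ?q + 1) - 1 < real (a + 1) / real m"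
      using r1 mpos by (simp add: pos_less_divide_eq)
    show "real (a + 1) / real m \<le> real_of_int (int ?q + 1)"
      using r2 mpos by (simp add: pos_divide_le_eq)
  qed
qed

lemma part1:
  fixes C1 C2 :: "('a::field^'n^'m) set" and l r :: nat
  assumes "mat.subspace C1" and "mat.subspace C2" and "C2 \<subset> C1"
    and "l = mat.dim C1 - mat.dim C2" and "1 \<le> r" "r \<le> l"
  shows "int (dMr r C1 C2) \<le> int CARD('n) - \<lceil>real (l - r + 1) / real CARD('m)\<rceil> + 1"
proof -
  let ?m = "CARD('m)" and ?n = "CARD('n)"
  define a where "a = l - r"
  define q where "q = a div ?m"
  have le21: "mat.dim C2 \<le> mat.dim C1" using assms(3) matf.dim_subset by auto
  have le1N: "mat.dim C1 \<le> ?m * ?n" by (rule dim_le_N)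
  have ceq: "\<lceil>real (l - r + 1) / real ?m\<rceil> = int q + 1"
    unfolding q_def a_def by (rule ceil_lem) simp
  have "a < ?n * ?m" using assms le1N le21 unfolding a_def by (simp add: mult.commute)
  then have qn: "q < ?n" unfolding q_def by (simp add: less_mult_imp_div_less)
  have qa: "q * ?m \<le> a" unfolding q_def by (simp add: div_times_less_eq_dividend)
  obtain S where S: "S \<subseteq> (UNIV::'n set)" "card S = ?n - q" "finite S"
    using obtain_subset_with_card_n[of "?n - q" "UNIV::'n set"] by auto
  let ?K = "VL (LS S) :: ('a^'n^'m) set"
  have kd: "?m * card S \<le> mat.dim ?K" by (rule VL_LS_dim)
  have "int (mat.dim (C1 \<inter> ?K)) - int (mat.dim (C2 \<inter> ?K)) \<ge>
     int (mat.dim C1) - int (mat.dim C2) - int (?m * ?n) + int (mat.dim ?K)"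
    by (rule key) (use assms VL_LS_subspace in auto)
  moreover have "int ?m * int (card S) = int ?m * int ?n - int ?m * int q"
    using S(2) qn by (simp add: of_nat_diff algebra_simps)
  moreover have "int ?m * int q \<le> int l - int r"
  proof -
    have "int (q * ?m) \<le> int (l - r)" using qa unfolding a_def by (simp only: of_nat_le_iff)
    also have "\<dots> = int l - int r" using assms(6) by (simp add: of_nat_diff)
    finally show ?thesis by (simp add: mult.commute)
  qed
  moreover have "int ?m * int (card S) \<le> int (mat.dim ?K)" using kd by (metis of_nat_le_iff of_nat_mult)
  moreover have "int l = int (mat.dim C1) - int (mat.dim C2)" using le21 assms(4) by (simp add: of_nat_diff)
  moreover have "int (?m * ?n) = int ?m * int ?n" by simp
  ultimately have diff: "int (mat.dim (C1 \<inter> ?K)) - int (mat.dim (C2 \<inter> ?K)) \<ge> int r"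
    by linarith
  have "dMr r C1 C2 \<le> vec.dim (LS S :: ('a^'n) set)"
    unfolding dMr_def by (rule Least_le) (use diff LS_subspace in blast)
  also have "\<dots> \<le> card S" by (rule LS_dim)
  finally show ?thesis using ceq S(2) qn by simp
qed

lemma part2:
  fixes C1 C2 :: "('a::field^'n^'m) set" and l :: nat
  assumes "mat.subspace C1" and "mat.subspace C2" and "C2 \<subset> C1"
    and "l = mat.dim C1 - mat.dim C2"
  shows "int l \<le> int (max CARD('m) CARD('n)) *
            (int (min CARD('m) CARD('n)) - int (dR C1 C2) + 1)"
proof -
  let ?m = "CARD('m)" and ?n = "CARD('n)"
  define d where "d = dR C1 C2"
  have le21: "mat.dim C2 \<le> mat.dim C1" using assms(3) matf.dim_subset by auto
  have le1N: "mat.dim C1 \<le> ?m * ?n" by (rule dim_le_N)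
  have lN: "l \<le> ?m * ?n" using assms(4) le1N by simp
  have mm: "max ?m ?n * min ?m ?n = ?m * ?n" by (cases "?m \<le> ?n") (auto simp: max_def min_def)
  have ex: "\<exists>k. \<exists>C \<in> C1 - C2. Rk C = k" using assms(3) by blast
  obtain C0 where C0: "C0 \<in> C1 - C2" "Rk C0 = d"
    using LeastI_ex[OF ex] unfolding d_def dR_def by blast
  have dmin: "\<And>C. C \<in> C1 - C2 \<Longrightarrow> d \<le> Rk C"
    unfolding d_def dR_def by (rule Least_le) blast
  have dm: "d \<le> ?m" using C0 Rk_le_m by metis
  have dn: "d \<le> ?n" using C0 Rk_le_n by metis
  have gen: "int l \<le> int (?m * ?n) - int (mat.dim K)"
    if K: "mat.subspace K" and small: "\<And>A. A \<in> K \<Longrightarrow> Rk A < d" for K :: "('a^'n^'m) set"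
  proof -
    have "C1 \<inter> K = C2 \<inter> K"
    proof
      show "C1 \<inter> K \<subseteq> C2 \<inter> K"
      proof
        fix A assume A: "A \<in> C1 \<inter> K"
        show "A \<in> C2 \<inter> K"
        proof (rule ccontr)
          assume "A \<notin> C2 \<inter> K"
          then have "A \<in> C1 - C2" using A by auto
          then have "d \<le> Rk A" by (rule dmin)
          then show False using small A by force
        qed
      qed
      show "C2 \<inter> K \<subseteq> C1 \<inter> K" using assms(3) by auto
    qed
    moreover have "int (mat.dim (C1 \<inter> K)) - int (mat.dim (C2 \<inter> K)) \<ge>
       int (mat.dim C1) - int (mat.dim C2) - int (?m * ?n) + int (mat.dim K)"
      by (rule key) (use assms K in auto)
    ultimately show ?thesis using assms(4) le21 by (simp add: of_nat_diff)
  qed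
  show ?thesis
  proof (cases "d = 0")
    case True
    have lmm: "l \<le> max ?m ?n * min ?m ?n + max ?m ?n" using lN mm by linarith
    have "int l \<le> int (max ?m ?n) * int (min ?m ?n) + int (max ?m ?n)"
      using of_nat_mono[OF lmm, where 'a=int] by simp
    then show ?thesis using True d_def by (simp add: algebra_simps)
  next
    case False
    show ?thesis
    proof (cases "?n \<le> ?m")
      case True
      have dn': "d - 1 \<le> card (UNIV::'n set)" using dn by simp
      obtain S where S: "S \<subseteq> (UNIV::'n set)" "card S = d - 1" "finite S"
        using obtain_subset_with_card_n[OF dn'] by blast
      let ?K = "VL (LS S) :: ('a^'n^'m) set"
      have "int l \<le> int (?m * ?n) - int (mat.dim ?K)"
      proof (rule gen)
        show "mat.subspace ?K" by (rule VL_LS_subspace)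
        fix A assume "A \<in> ?K"
        then have "Rk A \<le> vec.dim (LS S :: ('a^'n) set)" by (rule Rk_VL)
        also have "\<dots> \<le> card S" by (rule LS_dim)
        finally show "Rk A < d" using S(2) False by simp
      qed
      moreover have "int ?m * (int d - 1) \<le> int (mat.dim ?K)"
      proof -
        have "?m * card S \<le> mat.dim ?K" by (rule VL_LS_dim)
        then have "int (?m * card S) \<le> int (mat.dim ?K)" by (simp only: of_nat_le_iff)
        moreover have "int (?m * card S) = int ?m * (int d - 1)" using S(2) False by (simp add: of_nat_diff)
        ultimately show ?thesis by simp
      qed
      moreover have "int (?m * ?n) = int ?m * int ?n" by simp
      ultimately have "int l \<le> int ?m * int ?n - int ?m * (int d - 1)"
        by linarith
      then show ?thesis using True d_def by (simp add: max_absorb1 min_absorb2 algebra_simps)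
    next
      case nm: False
      have dm': "d - 1 \<le> card (UNIV::'m set)" using dm by simp
      obtain T where T: "T \<subseteq> (UNIV::'m set)" "card T = d - 1" "finite T"
        using obtain_subset_with_card_n[OF dm'] by blast
      let ?K = "RS T :: ('a^'n^'m) set"
      have "int l \<le> int (?m * ?n) - int (mat.dim ?K)"
      proof (rule gen)
        show "mat.subspace ?K" by (rule RS_subspace)
        fix A assume "A \<in> ?K"
        then have "Rk A \<le> card T" by (rule Rk_RS)
        then show "Rk A < d" using T(2) False by simp
      qed
      moreover have "int ?n * (int d - 1) \<le> int (mat.dim ?K)"
      proof -
        have "?n * card T \<le> mat.dim ?K" by (rule RS_dim)
        then have "int (?n * card T) \<le> int (mat.dim ?K)" by (simp only: of_nat_le_iff)
        moreover have "int (?n * card T) = int ?n * (int d - 1)" using T(2) False by (simp add: of_nat_diff)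
        ultimately show ?thesis by simp
      qed
      moreover have "int (?m * ?n) = int ?m * int ?n" by simp
      ultimately have "int l \<le> int ?m * int ?n - int ?n * (int d - 1)"
        by linarith
      then show ?thesis using nm d_def by (simp add: max_absorb2 min_absorb1 algebra_simps)
    qed
  qed
qed

theorem theorem5:
  fixes C1 C2 :: "('a::field^'n^'m) set" and l :: nat
  assumes "mat.subspace C1" and "mat.subspace C2" and "C2 \<subset> C1"
    and "l = mat.dim C1 - mat.dim C2"
  shows "(\<forall>r. 1 \<le> r \<and> r \<le> l \<longrightarrow>
            int (dMr r C1 C2) \<le> int CARD('n) - \<lceil>real (l - r + 1) / real CARD('m)\<rceil> + 1)
       \<and> int l \<le> int (max CARD('m) CARD('n)) *
            (int (min CARD('m) CARD('n)) - int (dR C1 C2) + 1)"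
  using part1[OF assms] part2[OF assms] by blast

end
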